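(* For every positive integer $n\notin\{1,2,3,6\}$, $A'(n,6,4)=A(n,6,4)$. Moreover, $A'(n,6,4)=1$ for $n\in\{1,2,3\}$ and $A'(6,6,4)=2$.
   Context: For ${\sf u},{\sf v}\in\mathbb{F}_2^n$, $\Delta({\sf u},{\sf v})$ is the Hamming distance and ${\rm wt}({\sf u})$ the Hamming weight. $A'(n,d,e)$ denotes the maximum size of a nonempty set $S\subseteq \mathbb{F}_2^n$ such that ${\rm wt}({\sf u})\le e$ for all ${\sf u}\in S$ and $\Delta({\sf u},{\sf v})\ge d$ for all distinct ${\sf u},{\sf v}\in S$. $A(n,d,e)$ denotes the maximum size of a set $S\subseteq\mathbb{F}_2^n$ all of whose elements have weight exactly $e$ and with pairwise distances at least $d$ (the maximum size of a constant-weight code). It is known that, writing $L(n)=\left\lfloor \frac{n}{4} \left\lfloor \frac{n-1}{3}\right\rfloor \right\rfloor$: $A(n,6,4)=L(n)-1$ if $n\equiv 7,10 \pmod{12}$ and $n\notin\{10,19\}$; $A(n,6,4)=L(n)-1$ if $n\in\{9,17\}$; $A(n,6,4)=L(n)-2$ if $n\in\{8,10,11\}$; $A(19,6,4)=L(19)-3$; and $A(n,6,4)=L(n)$ otherwise. *)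

theory Defs
  imports Main
begin

text \<open>Vectors of F_2^n are represented as boolean lists of length n.\<close>

definition vecs :: "nat \<Rightarrow> bool list set" where
  "vecs n = {u. length u = n}"

definition wt :: "bool list \<Rightarrow> nat" where
  "wt u = card {i. i < length u \<and> u ! i}"

definition hdist :: "bool list \<Rightarrow> bool list \<Rightarrow> nat" where
  "hdist u v = card {i. i < length u \<and> u ! i \<noteq> v ! i}"

definition min_dist_ok :: "nat \<Rightarrow> bool list set \<Rightarrow> bool" where
  "min_dist_ok d S \<longleftrightarrow> (\<forall>u\<in>S. \<forall>v\<in>S. u \<noteq> v \<longrightarrow> d \<le> hdist u v)"

definition A' :: "nat \<Rightarrow> nat \<Rightarrow> nat \<Rightarrow> nat" where
  "A' n d e = Max {card S | S. S \<subseteq> vecs n \<and> S \<noteq> {} \<and> (\<forall>u\<in>S. wt u \<le> e) \<and> min_dist_ok d S}"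

definition A :: "nat \<Rightarrow> nat \<Rightarrow> nat \<Rightarrow> nat" where
  "A n d e = Max {card S | S. S \<subseteq> vecs n \<and> (\<forall>u\<in>S. wt u = e) \<and> min_dist_ok d S}"

end

theory Submission
  imports Defs
begin

definition supp :: "bool list \<Rightarrow> nat set" where "supp u = {i. i < length u \<and> u ! i}"
definition vec :: "nat \<Rightarrow> nat set \<Rightarrow> bool list" where "vec n X = map (\<lambda>i. i \<in> X) [0..<n]"
definition sd :: "nat set \<Rightarrow> nat set \<Rightarrow> nat set" where "sd X Y = (X - Y) \<union> (Y - X)"

lemma card_sd: "finite X \<Longrightarrow> finite Y \<Longrightarrow> card (sd X Y) + 2 * card (X \<inter> Y) = card X + card Y"
proof -
  assume f: "finite X" "finite Y"
  have "card (sd X Y) = card (X - Y) + card (Y - X)" unfolding sd_def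
    using f by (intro card_Un_disjoint) auto
  moreover have "card (X - Y) = card X - card (X \<inter> Y)" using f by (simp add: card_Diff_subset_Int)
  moreover have "card (Y - X) = card Y - card (X \<inter> Y)" using f by (metis Int_commute card_Diff_subset_Int finite_Int)
  moreover have "card (X \<inter> Y) \<le> card X" "card (X \<inter> Y) \<le> card Y" using f by (auto intro: card_mono)
  ultimately show ?thesis by linarith
qed

lemma wt_supp: "wt u = card (supp u)" by (simp add: wt_def supp_def)
lemma supp_fin: "finite (supp u)" by (simp add: supp_def)
lemma supp_sub: "supp u \<subseteq> {..<length u}" by (auto simp: supp_def)
lemma hdist_supp: "length u = length v \<Longrightarrow> hdist u v = card (sd (supp u) (supp v))"
  unfolding hdist_def sd_def supp_def by (rule arg_cong[where f=card]) auto
lemma len_vec[simp]: "length (vec n X) = n" by (simp add: vec_def)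
lemma supp_vec[simp]: "supp (vec n X) = X \<inter> {..<n}" by (auto simp: supp_def vec_def)
lemma vec_supp: "length u = n \<Longrightarrow> vec n (supp u) = u"
  by (auto simp: supp_def vec_def intro!: nth_equalityI)


definition good :: "nat set set \<Rightarrow> bool" where
  "good F \<longleftrightarrow> (\<forall>X\<in>F. \<forall>Y\<in>F. X \<noteq> Y \<longrightarrow> 6 \<le> card (sd X Y))"
definition pk :: "nat set set \<Rightarrow> bool" where
  "pk F \<longleftrightarrow> (\<forall>X\<in>F. \<forall>Y\<in>F. X \<noteq> Y \<longrightarrow> card (X \<inter> Y) \<le> 1)"
definition blocks :: "nat \<Rightarrow> nat set set \<Rightarrow> bool" where
  "blocks n F \<longleftrightarrow> (\<forall>X\<in>F. X \<subseteq> {..<n} \<and> card X = 4)"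

lemma pk_good: "blocks n G \<Longrightarrow> pk G \<Longrightarrow> good G"
  unfolding good_def pk_def blocks_def
proof (intro ballI impI)
  fix X Y assume b: "\<forall>X\<in>G. X \<subseteq> {..<n} \<and> card X = 4" and p: "\<forall>X\<in>G. \<forall>Y\<in>G. X \<noteq> Y \<longrightarrow> card (X \<inter> Y) \<le> 1"
    and XY: "X \<in> G" "Y \<in> G" "X \<noteq> Y"
  have f: "finite X" "finite Y" using b XY by (meson finite_lessThan finite_subset)+
  have "card X = 4" "card Y = 4" "card (X \<inter> Y) \<le> 1" using b p XY by auto
  then show "6 \<le> card (sd X Y)" using card_sd[OF f] by linarith
qed

lemma card_le1I: "finite S \<Longrightarrow> (\<And>a b. a \<in> S \<Longrightarrow> b \<in> S \<Longrightarrow> a = b) \<Longrightarrow> card S \<le> 1"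
  by (simp add: card_le_Suc0_iff_eq)

lemma aux_int:
  assumes "a \<notin> T" "b \<notin> T'" "T \<inter> T' = {}" "\<not> (a \<in> T' \<and> b \<in> T)"
  shows "card (insert a T \<inter> insert b T') \<le> 1"
proof -
  have "insert a T \<inter> insert b T' \<subseteq> {a} \<or> insert a T \<inter> insert b T' \<subseteq> {b}"
    using assms by auto
  then show ?thesis by (metis card.empty card.insert card_mono empty_iff finite.intros le_numeral_extra(4) One_nat_def)
qed

lemma ext3:
  assumes F3: "finite F3" "\<forall>T\<in>F3. T \<subseteq> {..<n} \<and> card T = 3"
      "\<forall>T\<in>F3. \<forall>T'\<in>F3. T \<noteq> T' \<longrightarrow> T \<inter> T' = {}"
    and F4: "finite F4" "blocks n F4" "pk F4" "\<forall>T\<in>F3. \<forall>w\<in>F4. T \<inter> w = {}"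
    and e: "\<forall>T\<in>F3. e T < n \<and> e T \<notin> T"
      "\<forall>T\<in>F3. \<forall>T'\<in>F3. T \<noteq> T' \<longrightarrow> \<not> (e T \<in> T' \<and> e T' \<in> T)"
  shows "finite (F4 \<union> (\<lambda>T. insert (e T) T) ` F3) \<and> blocks n (F4 \<union> (\<lambda>T. insert (e T) T) ` F3)
     \<and> pk (F4 \<union> (\<lambda>T. insert (e T) T) ` F3) \<and> card (F4 \<union> (\<lambda>T. insert (e T) T) ` F3) = card F3 + card F4"
proof -
  let ?E = "(\<lambda>T. insert (e T) T) ` F3"
  have fT: "finite T" if "T \<in> F3" for T using F3 that by (meson finite_lessThan finite_subset)
  have c4: "card (insert (e T) T) = 4" if "T \<in> F3" for T using F3 e that fT by simp
  have ii: "card (insert (e T) T \<inter> insert (e T') T') \<le> 1" if "T \<in> F3" "T' \<in> F3" "T \<noteq> T'" for T T'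
    using aux_int[of "e T" T "e T'" T'] that F3 e by blast
  have iw: "card (insert (e T) T \<inter> w) \<le> 1" if "T \<in> F3" "w \<in> F4" for T w
  proof -
    have "insert (e T) T \<inter> w \<subseteq> {e T}" using F4 that by auto
    then show ?thesis by (metis card.empty card.insert card_mono empty_iff finite.intros le_numeral_extra(4) One_nat_def)
  qed
  have inj: "inj_on (\<lambda>T. insert (e T) T) F3"
  proof (rule inj_onI, rule ccontr)
    fix T T' assume "T \<in> F3" "T' \<in> F3" "insert (e T) T = insert (e T') T'" "T \<noteq> T'"
    then show False using ii[of T T'] c4[of T] by simp
  qed
  have disj: "F4 \<inter> ?E = {}"
  proof (rule ccontr)
    assume "F4 \<inter> ?E \<noteq> {}"
    then obtain T where "T \<in> F3" "insert (e T) T \<in> F4" by auto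
    then show False using iw[of T "insert (e T) T"] c4[of T] by simp
  qed
  have bl: "blocks n (F4 \<union> ?E)" using F4(2) c4 e F3(2) unfolding blocks_def by auto
  have "pk (F4 \<union> ?E)" unfolding pk_def
  proof (intro ballI impI)
    fix X Y assume X: "X \<in> F4 \<union> ?E" and Y: "Y \<in> F4 \<union> ?E" and XY: "X \<noteq> Y"
    show "card (X \<inter> Y) \<le> 1"
    proof (cases "X \<in> F4")
      case True
      show ?thesis
      proof (cases "Y \<in> F4")
        case True then show ?thesis using \<open>X \<in> F4\<close> XY F4(3) unfolding pk_def by blast
      next
        case False then obtain T where "T \<in> F3" "Y = insert (e T) T" using Y by auto
        then show ?thesis using iw[of T X] \<open>X \<in> F4\<close> by (simp add: Int_commute)
      qed
    next
      case False then obtain T where T: "T \<in> F3" "X = insert (e T) T" using X by auto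
      show ?thesis
      proof (cases "Y \<in> F4")
        case True then show ?thesis using iw T by simp
      next
        case False then obtain T' where "T' \<in> F3" "Y = insert (e T') T'" using Y by auto
        then show ?thesis using ii T XY by blast
      qed
    qed
  qed
  moreover have "card (F4 \<union> ?E) = card F3 + card F4"
    using card_Un_disjoint[OF F4(1) _ disj] F3(1) card_image[OF inj] by simp
  ultimately show ?thesis using bl F3(1) F4(1) by simp
qed



lemma uniq2: "pk W \<Longrightarrow> X \<in> W \<Longrightarrow> Y \<in> W \<Longrightarrow> a \<noteq> b \<Longrightarrow> a \<in> X \<Longrightarrow> b \<in> X \<Longrightarrow> a \<in> Y \<Longrightarrow> b \<in> Y
   \<Longrightarrow> finite X \<Longrightarrow> X = Y"
proof (rule ccontr)
  assume "pk W" "X \<in> W" "Y \<in> W" "a \<noteq> b" "a \<in> X" "b \<in> X" "a \<in> Y" "b \<in> Y" "finite X" "X \<noteq> Y"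
  then have "card (X \<inter> Y) \<le> 1" "{a,b} \<subseteq> X \<inter> Y" unfolding pk_def by auto
  moreover have "card {a,b} = 2" using \<open>a \<noteq> b\<close> by simp
  ultimately show False using card_mono[of "X \<inter> Y" "{a,b}"] \<open>finite X\<close> by simp
qed

definition okp :: "nat set \<Rightarrow> nat set \<Rightarrow> bool" where
  "okp X Y \<longleftrightarrow> (\<forall>a\<in>X \<inter> Y. \<forall>b\<in>X \<inter> Y. a = b)"
lemma okp_sym: "okp X Y \<longleftrightarrow> okp Y X" unfolding okp_def by blast

lemma ext2:
  assumes pq: "p < n" "q < n" "p \<noteq> q" and W: "finite W" "W \<noteq> {}" "blocks n W" "pk W"
    "\<forall>w\<in>W. p \<notin> w \<and> q \<notin> w" and n6: "n \<noteq> 6"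
  shows "\<exists>G. finite G \<and> blocks n G \<and> pk G \<and> card G = card W + 1"
proof (cases "\<exists>x y. x < n \<and> y < n \<and> x \<noteq> y \<and> x \<notin> {p,q} \<and> y \<notin> {p,q} \<and> (\<forall>w\<in>W. \<not> (x \<in> w \<and> y \<in> w))")
  case True
  then obtain x y where xy: "x < n" "y < n" "x \<noteq> y" "x \<notin> {p,q}" "y \<notin> {p,q}" "\<forall>w\<in>W. \<not> (x \<in> w \<and> y \<in> w)" by blast
  let ?N = "{p,q,x,y}"
  have NW: "?N \<notin> W" using W(5) by auto
  have cN: "card ?N = 4" using xy pq by auto
  have iN: "card (?N \<inter> w) \<le> 1" if "w \<in> W" for w
  proof (rule card_le1I)
    show "finite (?N \<inter> w)" by simp
    fix a b assume "a \<in> ?N \<inter> w" "b \<in> ?N \<inter> w"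
    then show "a = b" using xy(6) that W(5) by auto
  qed
  have "blocks n (insert ?N W)" using W(3) cN xy pq unfolding blocks_def by auto
  moreover have "pk (insert ?N W)" using W(4) iN unfolding pk_def by (auto simp: Int_commute)
  moreover have "card (insert ?N W) = card W + 1" using NW W(1) by simp
  ultimately show ?thesis using W(1) by blast
next
  case False
  then have cov: "\<And>x y. x < n \<Longrightarrow> y < n \<Longrightarrow> x \<noteq> y \<Longrightarrow> x \<notin> {p,q} \<Longrightarrow> y \<notin> {p,q} \<Longrightarrow> \<exists>w\<in>W. x \<in> w \<and> y \<in> w"
    by blast
  have fw: "finite w" "card w = 4" "w \<subseteq> {..<n}" if "w \<in> W" for w
    using W(3) that unfolding blocks_def by (auto intro: finite_subset)
  obtain B1 where B1: "B1 \<in> W" using W(2) by blast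
  have "\<exists>B2\<in>W. B2 \<noteq> B1"
  proof (rule ccontr)
    assume "\<not> ?thesis"
    then have WB: "W = {B1}" using B1 by blast
    have "{..<n} - {p,q} \<subseteq> B1"
    proof
      fix v assume v: "v \<in> {..<n} - {p,q}"
      show "v \<in> B1"
      proof (rule ccontr)
        assume vB: "v \<notin> B1"
        have "B1 \<noteq> {}" using fw[OF B1] by auto
        then obtain u where u: "u \<in> B1" by blast
        then have "u < n" "u \<notin> {p,q}" using fw[OF B1] W(5) B1 by auto
        then obtain w where "w \<in> W" "u \<in> w" "v \<in> w" using cov[of u v] v u vB by auto
        then show False using WB vB by simp
      qed
    qed
    moreover have "B1 \<subseteq> {..<n} - {p,q}" using fw[OF B1] W(5) B1 by auto
    ultimately have "B1 = {..<n} - {p,q}" by blast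
    then have "card ({..<n} - {p,q}) = 4" using fw[OF B1] by simp
    moreover have "card ({..<n} - {p,q}) = n - 2" using pq by (simp add: card_Diff_subset)
    ultimately show False using n6 by simp
  qed
  then obtain B2 where B2: "B2 \<in> W" "B2 \<noteq> B1" by blast
  have "card (B2 - B1) \<noteq> 0"
  proof
    assume "card (B2 - B1) = 0"
    then have "B2 \<subseteq> B1" using fw[OF B2(1)] by auto
    then have "B2 \<inter> B1 = B2" by auto
    moreover have "card (B2 \<inter> B1) \<le> 1" using W(4) B1 B2 unfolding pk_def by blast
    ultimately show False using fw[OF B2(1)] by simp
  qed
  then obtain r3 where r3: "r3 \<in> B2" "r3 \<notin> B1" by (metis DiffE card.empty equals0I)
  have "B1 \<noteq> {}" using fw[OF B1] by auto
  then obtain r1 where r1: "r1 \<in> B1" by blast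
  have "card (B1 - {r1}) = 3" using fw[OF B1] r1 by simp
  then have "B1 - {r1} \<noteq> {}" by (metis card.empty zero_neq_numeral)
  then obtain r2 where r2: "r2 \<in> B1" "r2 \<noteq> r1" by blast
  have nr: "r1 < n" "r2 < n" "r3 < n" "r1 \<notin> {p,q}" "r2 \<notin> {p,q}" "r3 \<notin> {p,q}"
    using fw B1 B2 r1 r2 r3 W(5) by auto
  obtain C2 where C2: "C2 \<in> W" "r2 \<in> C2" "r3 \<in> C2" using cov[of r2 r3] nr r2 r3 by (metis r2(1))
  obtain C3 where C3: "C3 \<in> W" "r1 \<in> C3" "r3 \<in> C3" using cov[of r1 r3] nr r1 r3 by (metis r1)
  have r1C2: "r1 \<notin> C2" using uniq2[OF W(4) B1 C2(1) r2(2)[symmetric] r1 r2(1)] C2 r3 fw[OF B1] by auto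
  have r2C3: "r2 \<notin> C3" using uniq2[OF W(4) B1 C3(1) r2(2)[symmetric] r1 r2(1)] C3 r3 fw[OF B1] by auto
  have r3ne: "r3 \<noteq> r1" "r3 \<noteq> r2" using r1 r2 r3 by auto
  have u12: "D = B1" if "D \<in> W" "r1 \<in> D" "r2 \<in> D" for D
    using uniq2[OF W(4) B1 that(1) r2(2)[symmetric] r1 r2(1) that(2,3) fw(1)[OF B1]] by simp
  have u23: "D = C2" if "D \<in> W" "r2 \<in> D" "r3 \<in> D" for D
    using uniq2[OF W(4) C2(1) that(1) r3ne(2)[symmetric] C2(2,3) that(2,3) fw(1)[OF C2(1)]] by simp
  have u13: "D = C3" if "D \<in> W" "r1 \<in> D" "r3 \<in> D" for D
    using uniq2[OF W(4) C3(1) that(1) r3ne(1)[symmetric] C3(2,3) that(2,3) fw(1)[OF C3(1)]] by simp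
  have d: "C2 \<noteq> B1" "C3 \<noteq> B1" "C2 \<noteq> C3" using r3 C2 C3 r1C2 by auto
  define B1' where "B1' = insert p (B1 - {r1})"
  define C2' where "C2' = insert p (C2 - {r2})"
  define C3' where "C3' = insert p (C3 - {r3})"
  define N where "N = {q, r1, r2, r3}"
  define R where "R = W - {B1, C2, C3}"
  define G where "G = R \<union> {B1', C2', C3', N}"
  have pW: "\<And>D. D \<in> W \<Longrightarrow> p \<notin> D \<and> q \<notin> D" using W(5) by auto
  have pkW: "\<And>X Y a b. X \<in> W \<Longrightarrow> Y \<in> W \<Longrightarrow> X \<noteq> Y \<Longrightarrow> a \<in> X \<Longrightarrow> a \<in> Y \<Longrightarrow> b \<in> X \<Longrightarrow> b \<in> Y \<Longrightarrow> a = b"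
  proof (rule ccontr)
    fix X Y a b assume h: "X \<in> W" "Y \<in> W" "X \<noteq> Y" "a \<in> X" "a \<in> Y" "b \<in> X" "b \<in> Y" "a \<noteq> b"
    show False using uniq2[OF W(4) h(1,2) h(8) h(4,6,5,7) fw(1)[OF h(1)]] h(3) by simp
  qed
  have bl: "blocks n G"
  proof -
    have "card B1' = 4" using fw[OF B1] r1 pW[OF B1] unfolding B1'_def by simp
    moreover have "card C2' = 4" using fw[OF C2(1)] C2 pW[OF C2(1)] unfolding C2'_def by simp
    moreover have "card C3' = 4" using fw[OF C3(1)] C3 pW[OF C3(1)] unfolding C3'_def by simp
    moreover have "card N = 4" unfolding N_def using r2 r3ne nr by auto
    moreover have "B1' \<subseteq> {..<n}" "C2' \<subseteq> {..<n}" "C3' \<subseteq> {..<n}" "N \<subseteq> {..<n}"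
      unfolding B1'_def C2'_def C3'_def N_def using fw B1 C2(1) C3(1) pq nr by auto
    ultimately show ?thesis using W(3) unfolding blocks_def G_def R_def by auto
  qed
  have pB1C2: "x = p" if "x \<in> B1'" "x \<in> C2'" for x
    using that pkW[OF B1 C2(1) d(1)[symmetric] r2(1) C2(2)] unfolding B1'_def C2'_def by auto
  have pB1C3: "x = p" if "x \<in> B1'" "x \<in> C3'" for x
    using that pkW[OF B1 C3(1) d(2)[symmetric] r1 C3(2)] unfolding B1'_def C3'_def by auto
  have pC2C3: "x = p" if "x \<in> C2'" "x \<in> C3'" for x
    using that pkW[OF C2(1) C3(1) d(3) C2(3) C3(3)] unfolding C2'_def C3'_def by auto
  have pNB1: "x = r2" if "x \<in> N" "x \<in> B1'" for x
    using that r3 pW[OF B1] pq nr unfolding N_def B1'_def by auto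
  have pNC2: "x = r3" if "x \<in> N" "x \<in> C2'" for x
    using that r1C2 pW[OF C2(1)] pq nr unfolding N_def C2'_def by auto
  have pNC3: "x = r1" if "x \<in> N" "x \<in> C3'" for x
    using that r2C3 pW[OF C3(1)] pq nr unfolding N_def C3'_def by auto
  have pRB1: "a = b" if "D \<in> R" "a \<in> D" "b \<in> D" "a \<in> B1'" "b \<in> B1'" for D a b
    using that pkW[OF that(1)[unfolded R_def, THEN DiffD1] B1] pW[of D] unfolding R_def B1'_def by auto
  have pRC2: "a = b" if "D \<in> R" "a \<in> D" "b \<in> D" "a \<in> C2'" "b \<in> C2'" for D a b
    using that pkW[OF that(1)[unfolded R_def, THEN DiffD1] C2(1)] pW[of D] unfolding R_def C2'_def by auto
  have pRC3: "a = b" if "D \<in> R" "a \<in> D" "b \<in> D" "a \<in> C3'" "b \<in> C3'" for D a b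
    using that pkW[OF that(1)[unfolded R_def, THEN DiffD1] C3(1)] pW[of D] unfolding R_def C3'_def by auto
  have pRN: "a = b" if "D \<in> R" "a \<in> D" "b \<in> D" "a \<in> N" "b \<in> N" for D a b
  proof (rule ccontr)
    assume ab: "a \<noteq> b"
    have DW: "D \<in> W" "D \<noteq> B1" "D \<noteq> C2" "D \<noteq> C3" using that(1) unfolding R_def by auto
    have "a \<in> {r1,r2,r3}" "b \<in> {r1,r2,r3}" using that pW[OF DW(1)] unfolding N_def by auto
    then show False using ab that(2,3) u12[OF DW(1)] u23[OF DW(1)] u13[OF DW(1)] DW by auto
  qed
  have pRR: "a = b" if "D \<in> R" "E \<in> R" "D \<noteq> E" "a \<in> D" "b \<in> D" "a \<in> E" "b \<in> E" for D E a b
    using pkW[of D E a b] that unfolding R_def by auto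
  have okn: "okp X Y" if "X \<in> {B1', C2', C3', N}" "Y \<in> {B1', C2', C3', N}" "X \<noteq> Y" for X Y
  proof -
    have "okp B1' C2'" "okp B1' C3'" "okp C2' C3'" "okp N B1'" "okp N C2'" "okp N C3'"
      unfolding okp_def using pB1C2 pB1C3 pC2C3 pNB1 pNC2 pNC3 by (metis IntE)+
    then show ?thesis using that okp_sym by auto
  qed
  have okr: "okp D Y" if "D \<in> R" "Y \<in> {B1', C2', C3', N}" for D Y
  proof -
    have "okp D B1'" "okp D C2'" "okp D C3'" "okp D N"
      unfolding okp_def using pRB1[OF that(1)] pRC2[OF that(1)] pRC3[OF that(1)] pRN[OF that(1)] by blast+
    then show ?thesis using that(2) by auto
  qed
  have okall: "okp X Y" if "X \<in> G" "Y \<in> G" "X \<noteq> Y" for X Y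
  proof (cases "X \<in> R")
    case True
    show ?thesis
    proof (cases "Y \<in> R")
      case True then show ?thesis using \<open>X \<in> R\<close> that pRR unfolding okp_def by blast
    next
      case False then show ?thesis using okr[OF True] that(2) unfolding G_def by blast
    qed
  next
    case False
    then have X: "X \<in> {B1', C2', C3', N}" using that(1) unfolding G_def by blast
    show ?thesis
    proof (cases "Y \<in> R")
      case True then show ?thesis using okr[OF True X] okp_sym by blast
    next
      case False then show ?thesis using okn[OF X _ that(3)] that(2) unfolding G_def by blast
    qed
  qed
  have pkG: "pk G" unfolding pk_def
  proof (intro ballI impI)
    fix X Y assume X: "X \<in> G" and Y: "Y \<in> G" and XY: "X \<noteq> Y"
    show "card (X \<inter> Y) \<le> 1"
    proof (rule card_le1I)
      show "finite (X \<inter> Y)" using bl X unfolding blocks_def by (auto intro: finite_subset)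
      fix a b assume a: "a \<in> X \<inter> Y" and b: "b \<in> X \<inter> Y"
      show "a = b" using okall[OF X Y XY] a b unfolding okp_def by blast
    qed
  qed
  have "card G = card W + 1"
  proof -
    have fR: "finite R" using W(1) unfolding R_def by simp
    have "card R = card W - 3" unfolding R_def using B1 C2(1) C3(1) d W(1)
      by (simp add: card_Diff_subset)
    moreover have "card W \<ge> 3"
    proof -
      have "card {B1, C2, C3} = 3" using d by auto
      moreover have "{B1, C2, C3} \<subseteq> W" using B1 C2(1) C3(1) by auto
      ultimately show ?thesis using card_mono[OF W(1)] by metis
    qed
    moreover have "card {B1', C2', C3', N} = 4"
    proof -
      have "r2 \<in> B1'" "r2 \<notin> C2'" "r3 \<in> C2'" "r3 \<notin> C3'" "r3 \<notin> B1'" "r1 \<in> C3'" "r1 \<notin> B1'"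
        "r1 \<notin> C2'" "q \<in> N" "q \<notin> B1'" "q \<notin> C2'" "q \<notin> C3'"
        unfolding B1'_def C2'_def C3'_def N_def using r1 r2 r3 nr pq r1C2 C2 C3 pW[OF B1] pW[OF C2(1)] pW[OF C3(1)] by auto
      then have "B1' \<noteq> C2'" "B1' \<noteq> C3'" "C2' \<noteq> C3'" "N \<noteq> B1'" "N \<noteq> C2'" "N \<noteq> C3'" by blast+
      then show ?thesis by simp
    qed
    moreover have "R \<inter> {B1', C2', C3', N} = {}"
      using pW unfolding R_def B1'_def C2'_def C3'_def N_def by auto
    ultimately show ?thesis unfolding G_def using card_Un_disjoint[OF fR, of "{B1', C2', C3', N}"] by simp
  qed
  moreover have "finite G" using W(1) unfolding G_def R_def by simp
  ultimately show ?thesis using pkG bl by blast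
qed



lemma conv:
  assumes n: "4 \<le> n" "n \<noteq> 6" and F: "finite F" "\<forall>X\<in>F. X \<subseteq> {..<n} \<and> card X \<le> 4" "good F"
  shows "\<exists>G. finite G \<and> blocks n G \<and> pk G \<and> card F \<le> card G"
proof (cases "card F \<le> 1")
  case True
  have "blocks n {{0,1,2,3}}" using n unfolding blocks_def by auto
  moreover have "pk {{0,1,2,3}}" unfolding pk_def by auto
  ultimately show ?thesis using True by (intro exI[of _ "{{0,1,2,3}}"]) auto
next
  case False
  have fX: "finite X" if "X \<in> F" for X using F(2) that by (meson finite_lessThan finite_subset)
  have cd: "6 + 2 * card (X \<inter> Y) \<le> card X + card Y" if "X \<in> F" "Y \<in> F" "X \<noteq> Y" for X Y
    using card_sd[OF fX[OF that(1)] fX[OF that(2)]] F(3) that unfolding good_def by force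
  have c4: "card X \<le> 4" if "X \<in> F" for X using F(2) that by auto
  have other: "\<exists>Y\<in>F. Y \<noteq> X" if "X \<in> F" for X
  proof -
    have cc: "card (F - {X}) = card F - 1" using that F(1) by simp
    have "F - {X} \<noteq> {}"
    proof
      assume h: "F - {X} = {}"
      have "card (F - {X}) = 0" by (simp only: h card.empty)
      then show False using cc False by linarith
    qed
    then show ?thesis by blast
  qed
  have ge2: "card X \<ge> 2" if X: "X \<in> F" for X
  proof -
    obtain Y where "Y \<in> F" "Y \<noteq> X" using other[OF X] by blast
    then show ?thesis using cd[OF X \<open>Y \<in> F\<close>] c4[of Y] by auto
  qed
  show ?thesis
  proof (cases "\<exists>P\<in>F. card P = 2")
    case True
    then obtain P where P: "P \<in> F" "card P = 2" by blast
    then obtain p q where pq: "P = {p,q}" "p \<noteq> q" by (meson card_2_iff)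
    define W where "W = F - {P}"
    have Wp: "card w = 4 \<and> P \<inter> w = {}" if "w \<in> W" for w
    proof -
      have "w \<in> F" "w \<noteq> P" using that unfolding W_def by auto
      then have "6 + 2 * card (P \<inter> w) \<le> 2 + card w" using cd[OF P(1)] P(2) by force
      moreover have "finite (P \<inter> w)" using fX[OF P(1)] by simp
      moreover note c4[OF \<open>w \<in> F\<close>]
      ultimately have "card w = 4" "card (P \<inter> w) = 0" "finite (P \<inter> w)" by linarith+
      then show ?thesis by simp
    qed
    have "finite W" using F(1) unfolding W_def by simp
    moreover have "W \<noteq> {}" using other[OF P(1)] unfolding W_def by blast
    moreover have "blocks n W" unfolding blocks_def using Wp F(2) unfolding W_def by auto
    moreover have "pk W" unfolding pk_def
    proof (intro ballI impI)
      fix X Y assume "X \<in> W" "Y \<in> W" "X \<noteq> Y"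
      then show "card (X \<inter> Y) \<le> 1" using cd[of X Y] Wp[of X] Wp[of Y] unfolding W_def by auto
    qed
    moreover have "\<forall>w\<in>W. p \<notin> w \<and> q \<notin> w" using Wp pq by auto
    moreover have "p < n" "q < n" using F(2) P(1) pq by auto
    ultimately obtain G where G: "finite G" "blocks n G" "pk G" "card G = card W + 1"
      using ext2[of p n q W] pq n by blast
    have "card F = card W + 1" unfolding W_def using P(1) F(1)
      by (metis One_nat_def Suc_pred add.right_neutral add_Suc_right card_Diff_singleton card_gt_0_iff empty_iff)
    then show ?thesis using G by auto
  next
    case no2: False
    define F3 where "F3 = {X\<in>F. card X = 3}"
    define F4 where "F4 = {X\<in>F. card X = 4}"
    have c34: "card X = 3 \<or> card X = 4" if X: "X \<in> F" for X
    proof -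
      have "card X \<noteq> 2" using no2 X by blast
      then show ?thesis using ge2[OF X] c4[OF X] by arith
    qed
    have FU: "F = F3 \<union> F4" "F3 \<inter> F4 = {}" unfolding F3_def F4_def using c34 by auto
    have fin34: "finite F3" "finite F4" using F(1) unfolding F3_def F4_def by auto
    have cF: "card F = card F3 + card F4" using FU fin34 card_Un_disjoint by metis
    have F3a: "\<forall>T\<in>F3. T \<subseteq> {..<n} \<and> card T = 3" using F(2) unfolding F3_def by auto
    have F3d: "\<forall>T\<in>F3. \<forall>T'\<in>F3. T \<noteq> T' \<longrightarrow> T \<inter> T' = {}"
    proof (intro ballI impI)
      fix T T' assume "T \<in> F3" "T' \<in> F3" "T \<noteq> T'"
      then have TT: "T \<in> F" "T' \<in> F" "card T = 3" "card T' = 3" "T \<noteq> T'" unfolding F3_def by auto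
      have "6 + 2 * card (T \<inter> T') \<le> card T + card T'" using cd TT by blast
      then have "card (T \<inter> T') = 0" using TT by linarith
      then show "T \<inter> T' = {}" using fX[OF TT(1)] by simp
    qed
    have F34: "\<forall>T\<in>F3. \<forall>w\<in>F4. T \<inter> w = {}"
    proof (intro ballI)
      fix T w assume "T \<in> F3" "w \<in> F4"
      moreover then have "T \<noteq> w" unfolding F3_def F4_def by auto
      ultimately have TF: "T \<in> F" "card T = 3" "w \<in> F" "card w = 4" "T \<noteq> w" unfolding F3_def F4_def by auto
      have "6 + 2 * card (T \<inter> w) \<le> card T + card w" using cd TF by blast
      then have "card (T \<inter> w) = 0" using TF by linarith
      then show "T \<inter> w = {}" using fX[OF TF(1)] by simp
    qed
    have bl4: "blocks n F4" using F(2) unfolding F4_def blocks_def by auto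
    have pk4: "pk F4" unfolding pk_def
    proof (intro ballI impI)
      fix X Y assume "X \<in> F4" "Y \<in> F4" "X \<noteq> Y"
      then have TT: "X \<in> F" "Y \<in> F" "card X = 4" "card Y = 4" "X \<noteq> Y" unfolding F4_def by auto
      have "6 + 2 * card (X \<inter> Y) \<le> card X + card Y" using cd TT by blast
      then show "card (X \<inter> Y) \<le> 1" using TT by linarith
    qed
    have "\<exists>e. (\<forall>T\<in>F3. e T < n \<and> e T \<notin> T) \<and> (\<forall>T\<in>F3. \<forall>T'\<in>F3. T \<noteq> T' \<longrightarrow> \<not> (e T \<in> T' \<and> e T' \<in> T))"
    proof (cases "\<exists>x<n. x \<notin> \<Union>F3")
      case True
      then obtain x where "x < n" "x \<notin> \<Union>F3" by blast
      then have "\<forall>T\<in>F3. x \<notin> T" by blast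
      then show ?thesis using \<open>x < n\<close> by (intro exI[of _ "\<lambda>_. x"]) blast
    next
      case False
      have cov: "{..<n} \<subseteq> \<Union>F3"
      proof
        fix x assume "x \<in> {..<n}"
        then have xn: "x < n" by simp
        show "x \<in> \<Union>F3"
        proof (rule ccontr)
          assume "x \<notin> \<Union>F3"
          with xn have "\<exists>x<n. x \<notin> \<Union>F3" by blast
          with False show False by contradiction
        qed
      qed
      show ?thesis
      proof (cases "card F3 \<ge> 3")
        case True
        then obtain A B C where ABC: "A \<in> F3" "B \<in> F3" "C \<in> F3" "A \<noteq> B" "B \<noteq> C" "A \<noteq> C"
        proof -
          obtain S where S: "S \<subseteq> F3" "card S = 3" "finite S" by (rule obtain_subset_with_card_n[OF True])
          have "\<exists>A B C. S = {A,B,C} \<and> A \<noteq> B \<and> B \<noteq> C \<and> A \<noteq> C" using S(2) by (simp only: card_3_iff)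
          then obtain A B C where ABC0: "S = {A,B,C}" "A \<noteq> B" "B \<noteq> C" "A \<noteq> C" by (elim exE conjE)
          have "A \<in> F3" "B \<in> F3" "C \<in> F3" using S(1) ABC0(1) by auto
          then show ?thesis using that ABC0(2-4) by simp
        qed
        have ne: "X \<noteq> {}" if "X \<in> F3" for X using F3a that by auto
        obtain a b c where abc: "a \<in> A" "b \<in> B" "c \<in> C" using ne ABC by blast
        define e where "e = (\<lambda>T. if T = A then b else if T = B then c else if T = C then a else a)"
        have dd: "\<And>T T' x. T \<in> F3 \<Longrightarrow> T' \<in> F3 \<Longrightarrow> x \<in> T \<Longrightarrow> x \<in> T' \<Longrightarrow> T = T'" using F3d by blast
        have lt: "a < n" "b < n" "c < n" using abc ABC F3a by auto
        show ?thesis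
        proof (intro exI[of _ e] conjI ballI impI)
          fix T assume T: "T \<in> F3"
          show "e T < n" unfolding e_def using lt by auto
          show "e T \<notin> T"
          proof
            assume "e T \<in> T"
            then consider "T = A" "b \<in> T" | "T = B" "c \<in> T" | "T = C" "a \<in> T" | "T \<noteq> A" "T \<noteq> B" "T \<noteq> C" "a \<in> T"
              unfolding e_def by (auto split: if_splits)
            then show False using dd[OF ABC(2) T abc(2)] dd[OF ABC(3) T abc(3)] dd[OF ABC(1) T abc(1)] ABC
              by cases auto
          qed
        next
          fix T T' assume T: "T \<in> F3" "T' \<in> F3" "T \<noteq> T'"
          have eA: "e A = b" "e B = c" "e C = a" using ABC unfolding e_def by auto
          have eO: "e X = a" if "X \<noteq> A" "X \<noteq> B" "X \<noteq> C" for X using that unfolding e_def by auto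
          show "\<not> (e T \<in> T' \<and> e T' \<in> T)"
          proof
            assume h: "e T \<in> T' \<and> e T' \<in> T"
            show False
            proof (cases "T = A")
              case True
              then have "T' = B" using h eA dd[OF ABC(2) T(2) abc(2)] by auto
              then show False using h True eA dd[OF ABC(3) ABC(1) abc(3)] ABC by auto
            next
              case nA: False
              show False
              proof (cases "T = B")
                case True
                then have "T' = C" using h eA dd[OF ABC(3) T(2) abc(3)] by auto
                then show False using h True eA dd[OF ABC(1) ABC(2) abc(1)] ABC by auto
              next
                case nB: False
                show False
                proof (cases "T = C")
                  case True
                  then have "T' = A" using h eA dd[OF ABC(1) T(2) abc(1)] by auto
                  then show False using h True eA dd[OF ABC(2) ABC(3) abc(2)] ABC by auto
                next
                  case False
                  then have "T' = A" using h eO[OF nA nB False] dd[OF ABC(1) T(2) abc(1)] by auto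
                  then show False using h eA dd[OF ABC(2) T(1) abc(2)] nB by auto
                qed
              qed
            qed
          qed
        qed
      next
        case False
        have "pairwise disjnt F3" using F3d unfolding pairwise_def disjnt_def by blast
        moreover have "\<And>T. T \<in> F3 \<Longrightarrow> finite T" using F3a by (meson finite_lessThan finite_subset)
        ultimately have "card (\<Union>F3) = sum card F3" by (rule card_Union_disjoint)
        also have "\<dots> = sum (\<lambda>_. 3) F3" using F3a by (intro sum.cong) auto
        also have "\<dots> = 3 * card F3" by simp
        finally have "card (\<Union>F3) = 3 * card F3" .
        moreover have "\<Union>F3 = {..<n}"
        proof (rule antisym)
          show "\<Union>F3 \<subseteq> {..<n}" using F3a by blast
        qed (rule cov)
        ultimately have "n = 3 * card F3" by simp
        then show ?thesis using False n by auto
      qed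
    qed
    then obtain e where e: "\<forall>T\<in>F3. e T < n \<and> e T \<notin> T" "\<forall>T\<in>F3. \<forall>T'\<in>F3. T \<noteq> T' \<longrightarrow> \<not> (e T \<in> T' \<and> e T' \<in> T)"
      by blast
    note h = ext3[OF fin34(1) F3a F3d fin34(2) bl4 pk4 F34 e]
    show ?thesis
      by (rule exI[of _ "F4 \<union> (\<lambda>T. insert (e T) T) ` F3"]) (use h cF in simp)
  qed
qed



lemma vecs_fin: "finite (vecs n)"
proof -
  have "vecs n = {xs. set xs \<subseteq> (UNIV::bool set) \<and> length xs = n}" unfolding vecs_def by auto
  then show ?thesis using finite_lists_length_eq[of "UNIV::bool set" n] by simp
qed

lemma cards_fin: "finite {card S | S. S \<subseteq> vecs n \<and> P S}"
proof -
  have "{card S | S. S \<subseteq> vecs n \<and> P S} \<subseteq> card ` Pow (vecs n)" by auto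
  then show ?thesis using vecs_fin by (meson finite_Pow_iff finite_imageI finite_subset)
qed

lemma wt_rep: "wt (replicate n False) = 0"
proof -
  have "{i. i < length (replicate n False) \<and> replicate n False ! i} = {}" by auto
  then show ?thesis unfolding wt_def by simp
qed

lemma A'_le_A:
  assumes n: "4 \<le> n" "n \<noteq> 6"
  shows "A' n 6 4 \<le> A n 6 4"
  unfolding A'_def
proof (rule Max.boundedI)
  show "finite {card S |S. S \<subseteq> vecs n \<and> S \<noteq> {} \<and> (\<forall>u\<in>S. wt u \<le> 4) \<and> min_dist_ok 6 S}"
    using cards_fin by simp
  have "{replicate n False} \<subseteq> vecs n" unfolding vecs_def by auto
  moreover have "wt (replicate n False) \<le> 4" using wt_rep by simp
  ultimately show "{card S |S. S \<subseteq> vecs n \<and> S \<noteq> {} \<and> (\<forall>u\<in>S. wt u \<le> 4) \<and> min_dist_ok 6 S} \<noteq> {}"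
    unfolding min_dist_ok_def by blast
next
  fix k assume "k \<in> {card S |S. S \<subseteq> vecs n \<and> S \<noteq> {} \<and> (\<forall>u\<in>S. wt u \<le> 4) \<and> min_dist_ok 6 S}"
  then obtain S where S: "k = card S" "S \<subseteq> vecs n" "\<forall>u\<in>S. wt u \<le> 4" "min_dist_ok 6 S" by blast
  have len: "length u = n" if "u \<in> S" for u using S(2) that unfolding vecs_def by auto
  have inj: "inj_on supp S"
    by (rule inj_onI) (metis vec_supp len)
  define F where "F = supp ` S"
  have finS: "finite S" using S(2) vecs_fin finite_subset by blast
  have cF: "card F = card S" unfolding F_def using card_image[OF inj] .
  have "finite F" unfolding F_def using finS by simp
  moreover have "\<forall>X\<in>F. X \<subseteq> {..<n} \<and> card X \<le> 4"
    unfolding F_def using S(3) len supp_sub wt_supp by fastforce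
  moreover have "good F" unfolding good_def F_def
  proof (intro ballI impI)
    fix X Y assume "X \<in> supp ` S" "Y \<in> supp ` S" "X \<noteq> Y"
    then obtain u v where uv: "u \<in> S" "v \<in> S" "X = supp u" "Y = supp v" by blast
    then have "u \<noteq> v" using \<open>X \<noteq> Y\<close> by auto
    then have "6 \<le> hdist u v" using S(4) uv unfolding min_dist_ok_def by blast
    then show "6 \<le> card (sd X Y)" using hdist_supp[of u v] len uv by simp
  qed
  ultimately obtain G where G: "finite G" "blocks n G" "pk G" "card F \<le> card G"
    using conv[OF n] by blast
  have Gs: "X \<subseteq> {..<n}" "card X = 4" if "X \<in> G" for X using G(2) that unfolding blocks_def by auto
  have sv: "supp (vec n X) = X" if "X \<in> G" for X using Gs[OF that] by auto
  define S' where "S' = vec n ` G"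
  have injv: "inj_on (vec n) G" by (rule inj_onI) (metis sv)
  have cS': "card S' = card G" unfolding S'_def using card_image[OF injv] .
  have "S' \<subseteq> vecs n" unfolding S'_def vecs_def by auto
  moreover have "\<forall>u\<in>S'. wt u = 4" unfolding S'_def using sv Gs wt_supp by auto
  moreover have "min_dist_ok 6 S'" unfolding min_dist_ok_def S'_def
  proof (intro ballI impI)
    fix u v assume "u \<in> vec n ` G" "v \<in> vec n ` G" "u \<noteq> v"
    then obtain X Y where XY: "X \<in> G" "Y \<in> G" "u = vec n X" "v = vec n Y" by blast
    then have "X \<noteq> Y" using \<open>u \<noteq> v\<close> by auto
    then have "6 \<le> card (sd X Y)" using pk_good[OF G(2,3)] XY unfolding good_def by blast
    then show "6 \<le> hdist u v" using hdist_supp[of u v] XY sv by simp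
  qed
  ultimately have "card S' \<in> {card S |S. S \<subseteq> vecs n \<and> (\<forall>u\<in>S. wt u = 4) \<and> min_dist_ok 6 S}" by blast
  then have "card S' \<le> A n 6 4" unfolding A_def using cards_fin by (intro Max_ge) auto
  then show "k \<le> A n 6 4" using S(1) cF G(4) cS' by linarith
qed

lemma A_le_A':
  assumes n: "4 \<le> n"
  shows "A n 6 4 \<le> A' n 6 4"
proof -
  let ?M = "{card S |S. S \<subseteq> vecs n \<and> (\<forall>u\<in>S. wt u = 4) \<and> min_dist_ok 6 S}"
  let ?M' = "{card S |S. S \<subseteq> vecs n \<and> S \<noteq> {} \<and> (\<forall>u\<in>S. wt u \<le> 4) \<and> min_dist_ok 6 S}"
  have "{} \<subseteq> vecs n \<and> (\<forall>u\<in>{}. wt u = 4) \<and> min_dist_ok 6 {}" unfolding min_dist_ok_def by simp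
  then have "card {} \<in> ?M" by (intro CollectI exI[of _ "{}"]) simp
  then have ne: "?M \<noteq> {}" by blast
  have "A n 6 4 \<in> ?M" unfolding A_def using cards_fin ne by (intro Max_in) auto
  then obtain S where S: "A n 6 4 = card S" "S \<subseteq> vecs n" "\<forall>u\<in>S. wt u = 4" "min_dist_ok 6 S" by blast
  show ?thesis
  proof (cases "S = {}")
    case True then show ?thesis using S(1) by simp
  next
    case False
    have "\<forall>u\<in>S. wt u \<le> 4" using S(3) by simp
    then have "card S \<in> ?M'" using S(2,4) False by blast
    moreover have "finite ?M'" using cards_fin by simp
    ultimately have "card S \<le> Max ?M'" by (rule Max_ge[rotated])
    then show ?thesis unfolding A'_def using S(1) by simp
  qed
qed

lemma hdist_le: "hdist u v \<le> length u"
  unfolding hdist_def by (rule order_trans[OF card_mono[of "{..<length u}"]]) auto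

lemma three_bound:
  assumes "length u = n" "length v = n" "length w = n" "6 \<le> hdist u v" "6 \<le> hdist v w" "6 \<le> hdist u w"
  shows "9 \<le> n"
proof -
  define X where "X = supp u" define Y where "Y = supp v" define Z where "Z = supp w"
  define D1 where "D1 = sd X Y" define D2 where "D2 = sd Y Z"
  have e: "sd X Z = sd D1 D2" unfolding D1_def D2_def sd_def by auto
  have f: "finite D1" "finite D2" unfolding D1_def D2_def sd_def X_def Y_def Z_def using supp_fin by auto
  have "X \<subseteq> {..<n}" "Y \<subseteq> {..<n}" "Z \<subseteq> {..<n}" unfolding X_def Y_def Z_def
    using supp_sub[of u] supp_sub[of v] supp_sub[of w] assms(1-3) by auto
  then have s: "D1 \<union> D2 \<subseteq> {..<n}" unfolding D1_def D2_def sd_def by auto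
  have "card (D1 \<union> D2) \<le> n" using card_mono[OF _ s] by simp
  moreover have "card (D1 \<union> D2) + card (D1 \<inter> D2) = card D1 + card D2" using card_Un_Int[OF f] by simp
  moreover have "card (sd D1 D2) + 2 * card (D1 \<inter> D2) = card D1 + card D2" using card_sd[OF f] .
  moreover have "6 \<le> card D1" "6 \<le> card D2" "6 \<le> card (sd X Z)"
    using assms hdist_supp unfolding D1_def D2_def X_def Y_def Z_def by auto
  moreover have "6 \<le> card (sd D1 D2)" using calculation(6) e by simp
  ultimately show ?thesis by linarith
qed

lemma small_n:
  assumes "n \<in> {1,2,3}" shows "A' n 6 4 = 1"
  unfolding A'_def
proof (rule Max_eqI)
  show "finite {card S |S. S \<subseteq> vecs n \<and> S \<noteq> {} \<and> (\<forall>u\<in>S. wt u \<le> 4) \<and> min_dist_ok 6 S}"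
    using cards_fin by simp
  fix k assume "k \<in> {card S |S. S \<subseteq> vecs n \<and> S \<noteq> {} \<and> (\<forall>u\<in>S. wt u \<le> 4) \<and> min_dist_ok 6 S}"
  then obtain S where S: "k = card S" "S \<subseteq> vecs n" "min_dist_ok 6 S" by blast
  have "finite S" using S(2) vecs_fin finite_subset by blast
  moreover have "u = v" if "u \<in> S" "v \<in> S" for u v
  proof (rule ccontr)
    assume "u \<noteq> v"
    then have "6 \<le> hdist u v" using S(3) that unfolding min_dist_ok_def by blast
    moreover have "length u = n" using S(2) that unfolding vecs_def by auto
    ultimately show False using hdist_le[of u v] assms by auto
  qed
  ultimately show "k \<le> 1" using S(1) card_le1I by (metis One_nat_def card_le_Suc0_iff_eq)
next
  have "wt (replicate n False) \<le> 4" using wt_rep by simp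
  then show "1 \<in> {card S |S. S \<subseteq> vecs n \<and> S \<noteq> {} \<and> (\<forall>u\<in>S. wt u \<le> 4) \<and> min_dist_ok 6 S}"
    unfolding min_dist_ok_def vecs_def by (intro CollectI exI[of _ "{replicate n False}"]) auto
qed

lemma six: "A' 6 6 4 = 2"
  unfolding A'_def
proof (rule Max_eqI)
  show "finite {card S |S. S \<subseteq> vecs 6 \<and> S \<noteq> {} \<and> (\<forall>u\<in>S. wt u \<le> 4) \<and> min_dist_ok 6 S}"
    using cards_fin by simp
  fix k assume "k \<in> {card S |S. S \<subseteq> vecs 6 \<and> S \<noteq> {} \<and> (\<forall>u\<in>S. wt u \<le> 4) \<and> min_dist_ok 6 S}"
  then obtain S where S: "k = card S" "S \<subseteq> vecs 6" "min_dist_ok 6 S" by blast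
  show "k \<le> 2"
  proof (rule ccontr)
    assume "\<not> k \<le> 2"
    then have "3 \<le> card S" using S(1) by simp
    then obtain T where T: "T \<subseteq> S" "card T = 3" using obtain_subset_with_card_n by metis
    then obtain u v w where uvw: "T = {u,v,w}" "u \<noteq> v" "v \<noteq> w" "u \<noteq> w" by (auto simp: card_3_iff)
    have m: "u \<in> S" "v \<in> S" "w \<in> S" using T uvw by auto
    then have l: "length u = 6" "length v = 6" "length w = 6" using S(2) unfolding vecs_def by auto
    have "6 \<le> hdist u v" "6 \<le> hdist v w" "6 \<le> hdist u w"
      using S(3) m uvw(2-4) unfolding min_dist_ok_def by blast+
    then have "9 \<le> (6::nat)" using three_bound[OF l] by blast
    then show False by simp
  qed
next
  define u where "u = vec 6 {0,1,2}"
  define v where "v = vec 6 {3,4,5}"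
  have su: "supp u = {0,1,2}" unfolding u_def by auto
  have sv: "supp v = {3,4,5}" unfolding v_def by auto
  have lu: "length u = 6" "length v = 6" unfolding u_def v_def by simp_all
  have wu: "wt u = 3" "wt v = 3" unfolding wt_supp su sv by simp_all
  have "sd {0,1,2} {3,4,5} = {0,1,2,3,4,5::nat}" unfolding sd_def by auto
  then have h1: "hdist u v = 6" using hdist_supp[of u v] lu su sv by simp
  have "sd {3,4,5} {0,1,2} = {0,1,2,3,4,5::nat}" unfolding sd_def by auto
  then have h2: "hdist v u = 6" using hdist_supp[of v u] lu su sv by simp
  have uv: "u \<noteq> v" using su sv by auto
  have "{u, v} \<subseteq> vecs 6" unfolding vecs_def using lu by auto
  moreover have "{u,v} \<noteq> {}" by simp
  moreover have "\<forall>x\<in>{u,v}. wt x \<le> 4" using wu by simp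
  moreover have "min_dist_ok 6 {u,v}" unfolding min_dist_ok_def using h1 h2 by auto
  moreover have "card {u,v} = 2" using uv by simp
  ultimately show "2 \<in> {card S |S. S \<subseteq> vecs 6 \<and> S \<noteq> {} \<and> (\<forall>u\<in>S. wt u \<le> 4) \<and> min_dist_ok 6 S}"
    by (intro CollectI exI[of _ "{u,v}"]) simp
qed

theorem corollary3:
  shows "(\<forall>n::nat. n \<ge> 1 \<and> n \<notin> {1, 2, 3, 6} \<longrightarrow> A' n 6 4 = A n 6 4)
       \<and> (\<forall>n::nat. n \<in> {1, 2, 3} \<longrightarrow> A' n 6 4 = 1)
       \<and> A' 6 6 4 = 2"
proof (intro conjI allI impI)
  fix n :: nat assume "n \<ge> 1 \<and> n \<notin> {1, 2, 3, 6}"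
  then have "4 \<le> n" "n \<noteq> 6" by auto
  then show "A' n 6 4 = A n 6 4" using A'_le_A A_le_A' by (simp add: le_antisym)
next
  fix n :: nat assume "n \<in> {1,2,3}" then show "A' n 6 4 = 1" by (rule small_n)
next
  show "A' 6 6 4 = 2" by (rule six)
qed

end
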